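(* Suppose that $\lim_{M\to\infty}\sup_{r>0}\frac{\Psi^*(r)}{\Psi^*(Mr)}=0$. Then for each fixed $c>0$ the function $H_c(M):=c^{-d}\sup_{t>0}\mathbb P_0\big(|X_t|>cM\Phi^{-1}(t)\big)$ satisfies $\lim_{M\to\infty}H_c(M)=0$.
   Context: Let $d\ge1$ and let $X=(X_t,\mathbb P_x)$ be a symmetric Lévy process on $\mathbb R^d$ with $\mathbb P_x(X_0=x)=1$ and $\mathbb E_x[e^{i\xi\cdot(X_t-X_0)}]=e^{-t\Psi(\xi)}$, where $\Psi(\xi)=\sum_{i,j}a_{ij}\xi_i\xi_j+\int_{\mathbb R^d}(1-\cos(\xi\cdot y))J(y)dy$ with $A=(a_{ij})$ constant symmetric nonnegative definite and $J\ge0$ symmetric with $\int(1\wedge|z|^2)J(z)dz<\infty$; $X$ is not a compound Poisson process ($\Psi$ unbounded). Put $\Psi^*(r)=\sup_{|z|\le r}\Psi(z)$, $\Phi(r)=1/\Psi^*(1/r)$ ($r>0$), $\Phi(0)=0$, $\Phi^{-1}(t)=\inf\{s>0:\Phi(s)>t\}$. *)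

theory Defs
  imports "HOL-Probability.Probability"
begin

text \<open>Characteristic exponent (Levy-Khintchine form) of a symmetric Levy process on the
  Euclidean space 'a (of dimension d = DIM('a)):
  Psi(xi) = xi . A xi + int (1 - cos(xi . y)) J(y) dy,
  where A is a symmetric nonnegative definite linear map (the matrix (a_ij)).\<close>
definition LK_exponent :: "('a::euclidean_space \<Rightarrow> 'a) \<Rightarrow> ('a \<Rightarrow> real) \<Rightarrow> 'a \<Rightarrow> real" where
  "LK_exponent A J \<xi> = \<xi> \<bullet> A \<xi> + (LINT y|lborel. (1 - cos (\<xi> \<bullet> y)) * J y)"

definition char_fun :: "'a::euclidean_space measure \<Rightarrow> 'a \<Rightarrow> complex" where
  "char_fun \<mu> \<xi> = (CLINT x|\<mu>. cis (\<xi> \<bullet> x))"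

definition Psi_star :: "('a::euclidean_space \<Rightarrow> real) \<Rightarrow> real \<Rightarrow> real" where
  "Psi_star \<Psi> r = (SUP z\<in>{z. norm z \<le> r}. \<Psi> z)"

definition Phi_fun :: "('a::euclidean_space \<Rightarrow> real) \<Rightarrow> real \<Rightarrow> real" where
  "Phi_fun \<Psi> r = (if r = 0 then 0 else 1 / Psi_star \<Psi> (1 / r))"

definition Phi_inv :: "('a::euclidean_space \<Rightarrow> real) \<Rightarrow> real \<Rightarrow> real" where
  "Phi_inv \<Psi> t = Inf {s. s > 0 \<and> Phi_fun \<Psi> s > t}"

end

theory Submission
  imports Defs
begin


lemma levy_main_bound:
  assumes "real_distribution N" "u > 0"
  shows "u * measure N {x. abs x \<ge> 2 / u} \<le> Re (CLBINT t:{-u..u}. 1 - char N t)"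
proof -
  interpret Mn: real_distribution N by fact
  have *: "\<And>u x. u > 0 \<Longrightarrow> x \<noteq> 0 \<Longrightarrow> (CLBINT t:{-u..u}. 1 - iexp (t * x)) =
      2 * (u  - sin (u * x) / x)"
  proof -
    fix u :: real and x :: real
    assume "u > 0" and "x \<noteq> 0"
    hence "(CLBINT t:{-u..u}. 1 - iexp (t * x)) = (CLBINT t=-u..u. 1 - iexp (t * x))"
      by (subst interval_integral_Icc, auto)
    also have "\<dots> = (CLBINT t=-u..ereal 0. 1 - iexp (t * x)) + (CLBINT t= ereal 0..u. 1 - iexp (t * x))"
      using \<open>u > 0\<close>
      by (subst interval_integral_sum; force simp add: interval_integrable_isCont)
    also have "\<dots> = (CLBINT t=ereal 0..u. 1 - iexp (t * -x)) + (CLBINT t=ereal 0..u. 1 - iexp (t * x))"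
      by (subst interval_integral_reflect, auto)
    also have "... = CLBINT xa=ereal 0..ereal u. 1 - iexp (xa * - x) + (1 - iexp (xa * x))"
      by (subst interval_lebesgue_integral_add (2) [symmetric]) (auto simp: interval_integrable_isCont)
    also have "\<dots> = (LBINT t=ereal 0..u. 2 - 2 * cos (t * x))"
      unfolding exp_Euler cos_of_real by (simp flip: interval_lebesgue_integral_of_real)
    also have "\<dots> = 2 * u - 2 * sin (u * x) / x"
      by (subst interval_lebesgue_integral_diff)
         (auto intro!: interval_integrable_isCont
               simp: interval_lebesgue_integral_of_real integral_cos [OF \<open>x \<noteq> 0\<close>] mult.commute[of _ x])
    finally show "(CLBINT t:{-u..u}. 1 - iexp (t * x)) = 2 * (u  - sin (u * x) / x)"
      by (simp add: field_simps)
  qed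
  note \<open>u > 0\<close>
    interpret P: pair_sigma_finite "N" lborel ..
    have Mn1 [simp]: "measure (N) UNIV = 1" by (metis Mn.prob_space Mn.space_eq_univ)
    have Mn2 [simp]: "\<And>x. complex_integrable (N) (\<lambda>t. exp (\<i> * complex_of_real (x * t)))"
      by (rule Mn.integrable_const_bound [where B = 1], auto)
    have Mn3: "set_integrable (N \<Otimes>\<^sub>M lborel) (UNIV \<times> {- u..u}) (\<lambda>a. 1 - exp (\<i> * complex_of_real (snd a * fst a)))"
      using \<open>0 < u\<close>
      unfolding set_integrable_def
      by (intro integrableI_bounded_set_indicator [where B="2"])
         (auto simp: lborel.emeasure_pair_measure_Times ennreal_mult_less_top not_less top_unique
               split: split_indicator
               intro!: order_trans [OF norm_triangle_ineq4])
    have "(CLBINT t:{-u..u}. 1 - char (N) t) =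
        (CLBINT t:{-u..u}. (CLINT x | N. 1 - iexp (t * x)))"
      unfolding char_def by (rule set_lebesgue_integral_cong, auto simp del: of_real_mult)
    also have "\<dots> = (CLBINT t. (CLINT x | N. indicator {-u..u} t *\<^sub>R (1 - iexp (t * x))))"
      unfolding set_lebesgue_integral_def
      by (rule Bochner_Integration.integral_cong) (auto split: split_indicator)
    also have "\<dots> = (CLINT x | N. (CLBINT t:{-u..u}. 1 - iexp (t * x)))"
      using Mn3 by (subst P.Fubini_integral) (auto simp: indicator_times split_beta' set_integrable_def set_lebesgue_integral_def)
    also have "\<dots> = (CLINT x | N. (if x = 0 then 0 else 2 * (u  - sin (u * x) / x)))"
      using \<open>u > 0\<close> by (intro Bochner_Integration.integral_cong, auto simp add: * simp del: of_real_mult)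
    also have "\<dots> = (LINT x | N. (if x = 0 then 0 else 2 * (u  - sin (u * x) / x)))"
      by (rule integral_complex_of_real)
    finally have "Re (CLBINT t:{-u..u}. 1 - char (N) t) =
       (LINT x | N. (if x = 0 then 0 else 2 * (u  - sin (u * x) / x)))" by simp
    also have "\<dots> \<ge> (LINT x : {x. abs x \<ge> 2 / u} | N. u)"
    proof -
      have "complex_integrable (N) (\<lambda>x. CLBINT t:{-u..u}. 1 - iexp (snd (x, t) * fst (x, t)))"
        using Mn3 unfolding set_integrable_def set_lebesgue_integral_def
        by (intro P.integrable_fst) (simp add: indicator_times split_beta')
      hence "complex_integrable (N) (\<lambda>x. if x = 0 then 0 else 2 * (u  - sin (u * x) / x))"
        using \<open>u > 0\<close>
        unfolding set_integrable_def
        by (subst Bochner_Integration.integrable_cong) (auto simp add: * simp del: of_real_mult)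
      hence **: "integrable (N) (\<lambda>x. if x = 0 then 0 else 2 * (u  - sin (u * x) / x))"
        unfolding complex_of_real_integrable_eq .
      have "2 * sin x \<le> x" if "2 \<le> x" for x :: real
        by (rule order_trans[OF _ \<open>2 \<le> x\<close>]) auto
      moreover have "x \<le> 2 * sin x" if "x \<le> - 2" for x :: real
        by (rule order_trans[OF \<open>x \<le> - 2\<close>]) auto
      moreover have "x < 0 \<Longrightarrow> x \<le> sin x" for x :: real
        using sin_x_le_x[of "-x"] by simp
      ultimately show ?thesis
        using \<open>u > 0\<close> unfolding set_lebesgue_integral_def
        by (intro integral_mono [OF _ **])
           (auto simp: divide_simps sin_x_le_x mult.commute[of u] mult_neg_pos top_unique less_top[symmetric]
                 split: split_indicator)
    qed
    also (xtrans) have "(LINT x : {x. abs x \<ge> 2 / u} | N. u) = u * measure (N) {x. abs x \<ge> 2 / u}"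
      unfolding set_lebesgue_integral_def
      by (simp add: Mn.emeasure_eq_measure)
    finally show ?thesis .
qed


lemma proj_tail:
  fixes N :: "'a::euclidean_space measure" and i :: 'a and \<Psi> :: "'a \<Rightarrow> real"
  assumes pN: "prob_space N" and sN: "sets N = sets borel" and iB: "i \<in> Basis" and u: "u > 0"
    and t: "t \<ge> 0"
    and cf: "\<And>\<xi>. char_fun N \<xi> = complex_of_real (exp (- t * \<Psi> \<xi>))"
    and bd: "\<And>v. \<bar>v\<bar> \<le> u \<Longrightarrow> 0 \<le> \<Psi> (v *\<^sub>R i) \<and> \<Psi> (v *\<^sub>R i) \<le> B"
  shows "measure N {x. \<bar>x \<bullet> i\<bar> \<ge> 2 / u} \<le> 2 * t * B"
proof -
  define N' where "N' = distr N borel (\<lambda>x. x \<bullet> i)"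
  have meas: "(\<lambda>x. x \<bullet> i) \<in> measurable N borel" unfolding measurable_cong_sets[OF sN refl] by (intro borel_measurable_continuous_onI continuous_intros)
  have spN: "space N = UNIV" using sN sets_eq_imp_space_eq by fastforce
  have rd: "real_distribution N'"
    unfolding N'_def real_distribution_def real_distribution_axioms_def
    using prob_space.prob_space_distr[OF pN meas] by simp
  interpret N': real_distribution N' by (rule rd)
  have ch: "char N' v = complex_of_real (exp (- t * \<Psi> (v *\<^sub>R i)))" for v
  proof -
    have "char N' v = (CLINT x|N. iexp (v * (x \<bullet> i)))"
      unfolding char_def N'_def by (rule integral_distr[OF meas]) (intro borel_measurable_continuous_onI continuous_intros)
    also have "\<dots> = char_fun N (v *\<^sub>R i)"
      unfolding char_fun_def cis_conv_exp by (simp only: inner_scaleR_left inner_commute[of x i for x] of_real_mult mult_ac)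
    finally show ?thesis using cf by simp
  qed
  have "u * measure N' {x. abs x \<ge> 2 / u} \<le> Re (CLBINT v:{-u..u}. 1 - char N' v)"
    by (rule levy_main_bound[OF rd u])
  also have "\<dots> \<le> norm (CLBINT v:{-u..u}. 1 - char N' v)" by (rule complex_Re_le_cmod)
  also have "\<dots> \<le> (LBINT v:{-u..u}. norm (1 - char N' v))"
  proof (rule set_integral_norm_bound)
    show "set_integrable lborel {- u..u} (\<lambda>v. 1 - char N' v)"
      by (intro borel_integrable_atLeastAtMost' continuous_at_imp_continuous_on ballI
            continuous_intros N'.isCont_char)
  qed
  also have "\<dots> \<le> (LBINT v:{-u..u}. t * B)"
  proof (rule set_integral_mono)
    show "set_integrable lborel {- u..u} (\<lambda>v. norm (1 - char N' v))"
      by (intro borel_integrable_atLeastAtMost' continuous_at_imp_continuous_on ballI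
            continuous_intros N'.isCont_char)
    show "set_integrable lborel {- u..u} (\<lambda>v. t * B)"
      by (intro borel_integrable_atLeastAtMost' continuous_intros)
    fix v assume "v \<in> {-u..u}"
    then have b: "0 \<le> \<Psi> (v *\<^sub>R i)" "\<Psi> (v *\<^sub>R i) \<le> B" using bd[of v] by auto
    have e1: "exp (- t * \<Psi> (v *\<^sub>R i)) \<le> 1" using b t by (simp add: mult_nonneg_nonneg)
    have e2: "1 - t * \<Psi> (v *\<^sub>R i) \<le> exp (- t * \<Psi> (v *\<^sub>R i))"
      using exp_ge_add_one_self[of "- t * \<Psi> (v *\<^sub>R i)"] by simp
    have "norm (1 - char N' v) = 1 - exp (- t * \<Psi> (v *\<^sub>R i))"
      unfolding ch using e1
      by (metis abs_of_nonneg diff_ge_0_iff_ge norm_of_real of_real_1 of_real_diff)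
    also have "\<dots> \<le> t * B" using e2 b t mult_left_mono[OF b(2) t] by linarith
    finally show "norm (1 - char N' v) \<le> t * B" .
  qed
  also have "\<dots> = 2 * u * (t * B)" using u by (simp add: set_integral_const)
  finally have *: "u * measure N' {x. abs x \<ge> 2 / u} \<le> u * (2 * t * B)" by (simp add: algebra_simps)
  have "measure N' {x. abs x \<ge> 2 / u} = measure N {x. \<bar>x \<bullet> i\<bar> \<ge> 2 / u}"
    unfolding N'_def by (subst measure_distr[OF meas]) (auto simp: spN)
  with * u show ?thesis by simp
qed



lemma one_minus_cos_le: "1 - cos (x::real) \<le> x ^ 2"
proof -
  have "1 - cos x = 2 * sin (x/2) ^ 2" using cos_double_sin[of "x/2"] by simp
  also have "sin (x/2) ^ 2 \<le> (x/2) ^ 2"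
    using abs_sin_x_le_abs_x[of "x/2"] by (metis abs_ge_zero power2_abs power_mono)
  finally show ?thesis by (simp add: power_divide) (smt (verit) zero_le_power2)
qed

lemma integrand_bound:
  fixes \<xi> y :: "'a::euclidean_space" and J :: "'a \<Rightarrow> real"
  assumes "J y \<ge> 0"
  shows "norm ((1 - cos (\<xi> \<bullet> y)) * J y) \<le> max 2 (norm \<xi> ^ 2) * (min 1 (norm y ^ 2) * J y)"
proof -
  have c0: "0 \<le> 1 - cos (\<xi> \<bullet> y)" by simp
  have "1 - cos (\<xi> \<bullet> y) \<le> max 2 (norm \<xi> ^ 2) * min 1 (norm y ^ 2)"
  proof (cases "norm y ^ 2 \<le> 1")
    case True
    have "1 - cos (\<xi> \<bullet> y) \<le> (\<xi> \<bullet> y) ^ 2" by (rule one_minus_cos_le)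
    also have "\<dots> \<le> (norm \<xi> * norm y) ^ 2"
      by (metis abs_ge_zero Cauchy_Schwarz_ineq2 power2_abs power_mono)
    also have "\<dots> = norm \<xi> ^ 2 * norm y ^ 2" by (simp add: power_mult_distrib)
    also have "\<dots> \<le> max 2 (norm \<xi> ^ 2) * min 1 (norm y ^ 2)"
      using True by (simp add: mult_right_mono)
    finally show ?thesis .
  next
    case False
    have "1 - cos (\<xi> \<bullet> y) \<le> 2" using cos_ge_minus_one[of "\<xi> \<bullet> y"] by linarith
    then show ?thesis using False by (simp add: le_max_iff_disj)
  qed
  then show ?thesis using c0 assms
    by (simp add: abs_mult mult_right_mono mult.assoc[symmetric])
qed

lemma LK_integrable:
  fixes J :: "'a::euclidean_space \<Rightarrow> real"
  assumes J_meas: "J \<in> borel_measurable lborel" and J_nonneg: "\<And>z. J z \<ge> 0"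
    and J_int: "integrable lborel (\<lambda>z. min 1 (norm z ^ 2) * J z)"
  shows "integrable lborel (\<lambda>y. (1 - cos (\<xi> \<bullet> y)) * J y)"
proof (rule Bochner_Integration.integrable_bound)
  show "integrable lborel (\<lambda>y. max 2 (norm \<xi> ^ 2) * (min 1 (norm y ^ 2) * J y))"
    using J_int by simp
  show "(\<lambda>y. (1 - cos (\<xi> \<bullet> y)) * J y) \<in> borel_measurable lborel"
    using J_meas by measurable
  show "AE y in lborel. norm ((1 - cos (\<xi> \<bullet> y)) * J y) \<le> norm (max 2 (norm \<xi> ^ 2) * (min 1 (norm y ^ 2) * J y))"
    using integrand_bound[where J=J, OF J_nonneg] by (intro AE_I2) (smt (verit) real_norm_def)
qed

lemma LK_nonneg:
  assumes A_nonneg: "\<And>x. x \<bullet> A x \<ge> 0" and J_nonneg: "\<And>z. J z \<ge> 0"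
  shows "LK_exponent A J \<xi> \<ge> 0"
  unfolding LK_exponent_def using A_nonneg[of \<xi>]
  by (smt (verit) Bochner_Integration.integral_nonneg J_nonneg cos_le_one mult_nonneg_nonneg)

lemma LK_upper:
  fixes J :: "'a::euclidean_space \<Rightarrow> real"
  assumes A_lin: "linear A" and J_meas: "J \<in> borel_measurable lborel" and J_nonneg: "\<And>z. J z \<ge> 0"
    and J_int: "integrable lborel (\<lambda>z. min 1 (norm z ^ 2) * J z)"
  shows "\<exists>C. \<forall>\<xi>. LK_exponent A J \<xi> \<le> C * max 2 (norm \<xi> ^ 2)"
proof -
  obtain B where B: "\<And>x. norm (A x) \<le> B * norm x" using linear_bounded[OF A_lin] by blast
  define I where "I = (LINT y|lborel. min 1 (norm y ^ 2) * J y)"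
  have "LK_exponent A J \<xi> \<le> (\<bar>B\<bar> + I) * max 2 (norm \<xi> ^ 2)" for \<xi>
  proof -
    have "\<xi> \<bullet> A \<xi> \<le> norm \<xi> * norm (A \<xi>)" by (simp add: norm_cauchy_schwarz)
    also have "\<dots> \<le> norm \<xi> * (B * norm \<xi>)" using B by (simp add: mult_left_mono)
    also have "\<dots> \<le> \<bar>B\<bar> * max 2 (norm \<xi> ^ 2)"
      by (smt (verit) abs_ge_self mult.commute mult.left_commute mult_right_mono norm_ge_zero power2_eq_square zero_le_mult_iff)
    finally have 1: "\<xi> \<bullet> A \<xi> \<le> \<bar>B\<bar> * max 2 (norm \<xi> ^ 2)" .
    have "(LINT y|lborel. (1 - cos (\<xi> \<bullet> y)) * J y) \<le> (LINT y|lborel. max 2 (norm \<xi> ^ 2) * (min 1 (norm y ^ 2) * J y))"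
      by (rule integral_mono[OF LK_integrable[OF J_meas J_nonneg J_int]])
         (use J_int integrand_bound[where J=J, OF J_nonneg] in \<open>auto simp: abs_le_iff\<close>)
    also have "\<dots> = max 2 (norm \<xi> ^ 2) * I" unfolding I_def by simp
    finally show ?thesis using 1 unfolding LK_exponent_def by (simp add: algebra_simps)
  qed
  then show ?thesis by blast
qed

lemma LK_double:
  fixes J :: "'a::euclidean_space \<Rightarrow> real"
  assumes A_lin: "linear A" and J_meas: "J \<in> borel_measurable lborel" and J_nonneg: "\<And>z. J z \<ge> 0"
    and J_int: "integrable lborel (\<lambda>z. min 1 (norm z ^ 2) * J z)"
  shows "LK_exponent A J (2 *\<^sub>R \<xi>) \<le> 4 * LK_exponent A J \<xi>"
proof -
  have q: "(2 *\<^sub>R \<xi>) \<bullet> A (2 *\<^sub>R \<xi>) = 4 * (\<xi> \<bullet> A \<xi>)"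
    using linear_cmul[OF A_lin, of 2 \<xi>] by simp
  have pw: "1 - cos (2 * x) \<le> 4 * (1 - cos x)" for x :: real
  proof -
    have "1 - cos (2 * x) = 2 - 2 * cos x ^ 2" using cos_double_cos[of x] by simp
    moreover have "0 \<le> 2 * (cos x - 1) ^ 2" by simp
    ultimately show ?thesis by (simp add: power2_eq_square algebra_simps)
  qed
  have "(LINT y|lborel. (1 - cos ((2 *\<^sub>R \<xi>) \<bullet> y)) * J y) \<le> (LINT y|lborel. 4 * ((1 - cos (\<xi> \<bullet> y)) * J y))"
    by (rule integral_mono[OF LK_integrable[OF J_meas J_nonneg J_int] integrable_mult_right[OF LK_integrable[OF J_meas J_nonneg J_int]]])
       (use pw J_nonneg in \<open>auto intro!: mult_right_mono simp: mult.assoc[symmetric]\<close>)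
  also have "\<dots> = 4 * (LINT y|lborel. (1 - cos (\<xi> \<bullet> y)) * J y)" by simp
  finally show ?thesis unfolding LK_exponent_def q by simp
qed



theorem lemma4p3:
  fixes A :: "'a::euclidean_space \<Rightarrow> 'a" and J :: "'a \<Rightarrow> real"
    and \<mu> :: "real \<Rightarrow> 'a measure"
  assumes A_lin: "linear A"
    and A_sym: "\<And>x y. A x \<bullet> y = x \<bullet> A y"
    and A_nonneg: "\<And>x. x \<bullet> A x \<ge> 0"
    and J_meas: "J \<in> borel_measurable lborel"
    and J_nonneg: "\<And>z. J z \<ge> 0"
    and J_sym: "\<And>z. J (- z) = J z"
    and J_int: "integrable lborel (\<lambda>z. min 1 (norm z ^ 2) * J z)"
    and not_CP: "\<not> bdd_above (range (LK_exponent A J))"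
    and law_prob: "\<And>t. t > 0 \<Longrightarrow> prob_space (\<mu> t)"
    and law_sets: "\<And>t. t > 0 \<Longrightarrow> sets (\<mu> t) = sets borel"
    and law_cf: "\<And>t \<xi>. t > 0 \<Longrightarrow> char_fun (\<mu> t) \<xi> = complex_of_real (exp (- t * LK_exponent A J \<xi>))"
    and hyp: "((\<lambda>M. SUP r\<in>{0<..}. Psi_star (LK_exponent A J) r / Psi_star (LK_exponent A J) (M * r))
               \<longlongrightarrow> 0) at_top"
    and c_pos: "c > 0"
  shows "((\<lambda>M. c powr (- real DIM('a)) *
            (SUP t\<in>{0<..}. measure (\<mu> t) {x. norm x > c * M * Phi_inv (LK_exponent A J) t}))
          \<longlongrightarrow> 0) at_top"
proof -
  define \<Psi> where "\<Psi> = LK_exponent A J"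
  define P where "P = Psi_star \<Psi>"
  define g where "g = (\<lambda>M. SUP r\<in>{0<..}. P r / P (M * r))"
  have hyp': "(g \<longlongrightarrow> 0) at_top" using hyp unfolding g_def P_def \<Psi>_def .
  have F0: "\<And>z. \<Psi> z \<ge> 0" unfolding \<Psi>_def by (rule LK_nonneg[OF A_nonneg J_nonneg])
  obtain C where C: "\<And>\<xi>. \<Psi> \<xi> \<le> C * max 2 (norm \<xi> ^ 2)"
    using LK_upper[OF A_lin J_meas J_nonneg J_int] unfolding \<Psi>_def by blast
  have C0: "C \<ge> 0" using C[of 0] F0[of 0] by (simp add: zero_le_mult_iff)
  have F1: "bdd_above (\<Psi> ` {z. norm z \<le> r})" for r
  proof (rule bdd_aboveI2)
    fix z :: 'a assume "z \<in> {z. norm z \<le> r}"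
    then have "norm z ^ 2 \<le> r ^ 2" by (simp add: power_mono)
    then have "max 2 (norm z ^ 2) \<le> max 2 (r ^ 2)" by simp
    then show "\<Psi> z \<le> C * max 2 (r ^ 2)" using order_trans[OF C[of z] mult_left_mono[OF _ C0]] by blast
  qed
  have F2: "norm z \<le> r \<Longrightarrow> \<Psi> z \<le> P r" for z r
    unfolding P_def Psi_star_def by (rule cSUP_upper[OF _ F1]) simp
  have F3: "0 \<le> r1 \<Longrightarrow> r1 \<le> r2 \<Longrightarrow> P r1 \<le> P r2" for r1 r2
    unfolding P_def Psi_star_def by (rule cSUP_subset_mono[OF _ F1]) (auto intro!: exI[where x=0])
  have F3': "0 \<le> r \<Longrightarrow> (\<And>z. norm z \<le> r \<Longrightarrow> \<Psi> z \<le> b) \<Longrightarrow> P r \<le> b" for r b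
    unfolding P_def Psi_star_def by (rule cSUP_least) (auto intro!: exI[where x=0])
  have F4: "0 \<le> r \<Longrightarrow> 0 \<le> P r" for r using F2[of 0 r] F0[of 0] by simp
  have unb: "\<exists>z. \<Psi> z > b" for b using not_CP unfolding \<Psi>_def bdd_above_def by (auto simp: not_le)
  have F5: "0 < r \<Longrightarrow> 0 < P r" for r
  proof (rule ccontr)
    assume r: "0 < r" and "\<not> 0 < P r"
    then have P0: "P r = 0" using F4[of r] by simp
    have "\<forall>z. norm z \<le> 2 ^ n * r \<longrightarrow> \<Psi> z \<le> 0" for n
    proof (induction n)
      case 0 then show ?case using F2 P0 by fastforce
    next
      case (Suc n)
      show ?case
      proof (intro allI impI)
        fix z :: 'a assume z: "norm z \<le> 2 ^ Suc n * r"
        have "norm ((1/2) *\<^sub>R z) \<le> 2 ^ n * r" using z by simp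
        then have "\<Psi> ((1/2) *\<^sub>R z) \<le> 0" using Suc by blast
        moreover have "\<Psi> (2 *\<^sub>R ((1/2) *\<^sub>R z)) \<le> 4 * \<Psi> ((1/2) *\<^sub>R z)"
          unfolding \<Psi>_def by (rule LK_double[OF A_lin J_meas J_nonneg J_int])
        ultimately show "\<Psi> z \<le> 0" by simp
      qed
    qed
    moreover obtain z where z: "\<Psi> z > 0" using unb by blast
    moreover obtain n where "norm z / r < 2 ^ n" using real_arch_pow[of 2 "norm z / r"] by auto
    then have "norm z \<le> 2 ^ n * r" using r by (simp add: divide_less_eq)
    ultimately show False by force
  qed
  have F6: "1 \<le> K \<Longrightarrow> 0 < r \<Longrightarrow> P r \<le> g K * P (K * r)" for K r
  proof -
    assume K: "1 \<le> K" and r: "0 < r"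
    have bd: "bdd_above ((\<lambda>r. P r / P (K * r)) ` {0<..})"
    proof (rule bdd_aboveI2)
      fix r :: real assume "r \<in> {0<..}"
      then have "0 < r" by simp
      then have "P r \<le> P (K * r)" "0 < P (K * r)" using F3 F5 K by (auto simp: mult_le_cancel_right1)
      then show "P r / P (K * r) \<le> 1" by simp
    qed
    have "P r / P (K * r) \<le> g K" unfolding g_def by (rule cSUP_upper[OF _ bd]) (use r in auto)
    moreover have "0 < P (K * r)" using F5 K r by simp
    ultimately show ?thesis by (simp add: divide_le_eq)
  qed
  have g0: "1 \<le> K \<Longrightarrow> 0 \<le> g K" for K
  proof -
    assume K: "1 \<le> K"
    have "0 < g K * P K" using F6[of K 1] F5[of 1] K by simp
    then show ?thesis using F5[of K] K by (simp add: zero_less_mult_iff)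
  qed
  obtain M0 where M0: "1 \<le> M0" "g M0 < 1/2"
  proof -
    have "eventually (\<lambda>M. g M < 1/2) at_top" using hyp' by (rule order_tendstoD) simp
    then obtain N where "\<And>M. M \<ge> N \<Longrightarrow> g M < 1/2" by (auto simp: eventually_at_top_linorder)
    then show ?thesis using that[of "max N 1"] by simp
  qed
  have F8: "P (1 / M0 ^ n) \<le> (1/2) ^ n * P 1" for n
  proof (induction n)
    case 0 then show ?case by simp
  next
    case (Suc n)
    have pos: "0 < 1 / M0 ^ Suc n" using M0 by simp
    have "P (1 / M0 ^ Suc n) \<le> g M0 * P (M0 * (1 / M0 ^ Suc n))" by (rule F6[OF M0(1) pos])
    also have "M0 * (1 / M0 ^ Suc n) = 1 / M0 ^ n" using M0 by simp
    also have "g M0 * P (1 / M0 ^ n) \<le> (1/2) * P (1 / M0 ^ n)"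
      using M0 F4[of "1 / M0 ^ n"] by (intro mult_right_mono) auto
    also have "\<dots> \<le> (1/2) * ((1/2) ^ n * P 1)" using Suc by simp
    finally show ?case by simp
  qed
  have F8': "\<exists>\<rho>>0. P \<rho> < \<epsilon>" if eps: "\<epsilon> > 0" for \<epsilon>
  proof -
    obtain n where n: "(1/2::real) ^ n < \<epsilon> / P 1"
      using real_arch_pow_inv[of "\<epsilon> / P 1" "1/2"] F5[of 1] eps by auto
    have "P (1 / M0 ^ n) < \<epsilon>" using F8[of n] n F5[of 1] by (simp add: less_divide_eq)
    moreover have "1 / M0 ^ n > 0" using M0 by simp
    ultimately show ?thesis by blast
  qed
  define s where "s = (\<lambda>t. Phi_inv \<Psi> t)"
  have F9: "0 < s t \<and> t * P (1 / (2 * s t)) < 1" if t: "t > 0" for t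
  proof -
    define S where "S = {s'. s' > 0 \<and> Phi_fun \<Psi> s' > t}"
    have sS: "s t = Inf S" unfolding s_def S_def Phi_inv_def ..
    have PhiP: "s' > 0 \<Longrightarrow> Phi_fun \<Psi> s' = 1 / P (1 / s')" for s'
      unfolding Phi_fun_def P_def by simp
    obtain \<rho> where \<rho>: "\<rho> > 0" "P \<rho> < 1 / t" using F8'[of "1/t"] t by auto
    have "1 / \<rho> \<in> S" unfolding S_def using \<rho> PhiP[of "1/\<rho>"] F5[of \<rho>] t
      by (auto simp: less_divide_eq mult.commute)
    then have ne: "S \<noteq> {}" by blast
    obtain z where z: "\<Psi> z > 1 / t" using unb by blast
    define L where "L = 1 / (norm z + 1)"
    have nz: "0 < norm z + 1" using norm_ge_zero[of z] by linarith
    have L0: "L > 0" unfolding L_def using nz by simp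
    have SL: "s' \<in> S \<Longrightarrow> L \<le> s'" for s'
    proof (rule ccontr)
      assume "s' \<in> S" "\<not> L \<le> s'"
      then have s': "s' > 0" "s' < L" "Phi_fun \<Psi> s' > t" unfolding S_def by auto
      have "s' * (norm z + 1) < 1" using s' nz unfolding L_def by (simp add: less_divide_eq)
      then have "norm z + 1 < 1 / s'" using s' by (simp add: less_divide_eq mult.commute)
      then have "\<Psi> z \<le> P (1 / s')" by (intro F2) simp
      then have "P (1 / s') > 1 / t" using z by simp
      moreover have "0 < 1 / t" using t by simp
      ultimately have Pq: "0 < P (1 / s')" "1 / t < P (1 / s')" by linarith+
      then have "1 < t * P (1 / s')" using t by (simp add: divide_less_eq mult.commute)
      then have "1 / P (1 / s') < t" using Pq by (simp add: divide_less_eq mult.commute)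
      then show False using s' PhiP[of s'] by simp
    qed
    have bb: "bdd_below S" unfolding S_def by (rule bdd_belowI[of _ 0]) simp
    have sL: "L \<le> s t" unfolding sS by (rule cInf_greatest[OF ne SL])
    then have s0: "s t > 0" using L0 by simp
    have "Inf S < 2 * s t" using s0 sS by simp
    then obtain s' where s': "s' \<in> S" "s' < 2 * s t" using cInf_less_iff[OF ne bb] by blast
    then have s'': "s' > 0" "1 / P (1 / s') > t" unfolding S_def using PhiP by auto
    have Pp: "P (1 / s') > 0"
    proof (rule ccontr)
      assume "\<not> P (1 / s') > 0"
      then have "P (1 / s') \<le> 0" by simp
      then have "1 / P (1 / s') \<le> 0" by (subst divide_le_0_1_iff)
      then show False using s''(2) t by linarith
    qed
    have "t * P (1 / s') < 1" using s'' Pp by (simp add: less_divide_eq mult.commute)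
    moreover have "P (1 / (2 * s t)) \<le> P (1 / s')"
      using s' s'' s0 by (intro F3) (auto simp: frac_le)
    ultimately have "t * P (1 / (2 * s t)) < 1" using t mult_left_mono[of "P (1 / (2 * s t))" "P (1 / s')" t] by linarith
    then show ?thesis using s0 by simp
  qed
  define d where "d = real DIM('a)"
  have d0: "d > 0" unfolding d_def by simp

  have F10: "measure (\<mu> t) {x. norm x > c * M * s t} \<le> 2 * d * g (c / (4 * d) * M)"
    if t: "t > 0" and M: "c / (4 * d) * M \<ge> 1" for t M
  proof -
    define K where "K = c / (4 * d) * M"
    have K1: "K \<ge> 1" using M unfolding K_def .
    have Mp: "M > 0"
    proof (rule ccontr)
      assume "\<not> M > 0"
      then have "c * M \<le> 0" using c_pos by (simp add: mult_nonneg_nonpos)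
      then have "c * M / (4 * d) \<le> 0" using d0 by (simp add: divide_nonpos_pos)
      then have "c / (4 * d) * M \<le> 0" by simp
      then show False using M by simp
    qed
    have st: "0 < s t" "t * P (1 / (2 * s t)) < 1" using F9[OF t] by auto
    define r where "r = c * M * s t"
    have r0: "r > 0" unfolding r_def using c_pos Mp st by simp
    define u where "u = 2 * d / r"
    have u0: "u > 0" unfolding u_def using d0 r0 by simp
    have sets_eq: "sets (\<mu> t) = sets borel" by (rule law_sets[OF t])
    interpret prob_space "\<mu> t" by (rule law_prob[OF t])
    have tail: "measure (\<mu> t) {x. \<bar>x \<bullet> i\<bar> \<ge> 2 / u} \<le> 2 * t * P u" if i: "i \<in> Basis" for i
    proof (rule proj_tail[OF law_prob[OF t] sets_eq i u0])
      show "0 \<le> t" using t by simp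
      show "char_fun (\<mu> t) \<xi> = complex_of_real (exp (- t * \<Psi> \<xi>))" for \<xi>
        unfolding \<Psi>_def by (rule law_cf[OF t])
      fix v :: real assume v: "\<bar>v\<bar> \<le> u"
      have "norm (v *\<^sub>R i) \<le> u" using v i by simp
      then show "0 \<le> \<Psi> (v *\<^sub>R i) \<and> \<Psi> (v *\<^sub>R i) \<le> P u" using F0 F2 by blast
    qed
    have meas_i: "{x. \<bar>x \<bullet> i\<bar> \<ge> 2 / u} \<in> sets (\<mu> t)" for i
      unfolding sets_eq by measurable
    have sub: "{x::'a. norm x > r} \<subseteq> (\<Union>i\<in>Basis. {x. \<bar>x \<bullet> i\<bar> \<ge> 2 / u})"
    proof
      fix x :: 'a assume x: "x \<in> {x. norm x > r}"
      show "x \<in> (\<Union>i\<in>Basis. {x. \<bar>x \<bullet> i\<bar> \<ge> 2 / u})"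
      proof (rule ccontr)
        assume "x \<notin> (\<Union>i\<in>Basis. {x. \<bar>x \<bullet> i\<bar> \<ge> 2 / u})"
        then have lt: "\<And>i. i \<in> Basis \<Longrightarrow> \<bar>x \<bullet> i\<bar> < r / d" using u0 r0 d0 unfolding u_def by auto
        have "(\<Sum>i\<in>Basis. \<bar>x \<bullet> i\<bar>) < (\<Sum>i\<in>(Basis::'a set). r / d)"
          by (rule sum_strict_mono) (auto simp: lt)
        also have "\<dots> = r" unfolding d_def by simp
        finally show False using norm_le_l1[of x] x by simp
      qed
    qed
    have "measure (\<mu> t) {x. norm x > r} \<le> measure (\<mu> t) (\<Union>i\<in>Basis. {x. \<bar>x \<bullet> i\<bar> \<ge> 2 / u})"
      by (rule finite_measure_mono[OF sub]) (auto intro!: sets.finite_UN meas_i)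
    also have "\<dots> \<le> (\<Sum>i\<in>Basis. measure (\<mu> t) {x. \<bar>x \<bullet> i\<bar> \<ge> 2 / u})"
      by (rule measure_UNION_le) (auto intro: meas_i)
    also have "\<dots> \<le> (\<Sum>i\<in>(Basis::'a set). 2 * t * P u)" by (rule sum_mono) (rule tail)
    also have "\<dots> = d * (2 * t * P u)" unfolding d_def by simp
    also have "P u \<le> g K * P (K * u)" by (rule F6[OF K1 u0])
    also have "K * u = 1 / (2 * s t)"
      unfolding K_def u_def r_def using c_pos d0 Mp st by (simp add: field_simps)
    finally have "measure (\<mu> t) {x. norm x > r} \<le> d * (2 * t * (g K * P (1 / (2 * s t))))"
      using d0 t by (simp add: mult_left_mono)
    also have "\<dots> = 2 * d * g K * (t * P (1 / (2 * s t)))" by (simp add: algebra_simps)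
    also have "\<dots> \<le> 2 * d * g K * 1"
      using st g0[OF K1] d0 by (intro mult_left_mono) auto
    finally show ?thesis unfolding r_def K_def by simp
  qed
  define F where "F = (\<lambda>M. c powr (- d) *
            (SUP t\<in>{0<..}. measure (\<mu> t) {x. norm x > c * M * s t}))"
  have ev: "eventually (\<lambda>M. 0 \<le> F M \<and> F M \<le> c powr (- d) * (2 * d * g (c / (4 * d) * M))) at_top"
  proof -
    have "0 \<le> F M \<and> F M \<le> c powr (- d) * (2 * d * g (c / (4 * d) * M))"
      if M: "M \<ge> 4 * d / c" for M
    proof -
      have K1: "c / (4 * d) * M \<ge> 1" using M c_pos d0 by (simp add: field_simps)
      let ?f = "\<lambda>t. measure (\<mu> t) {x. norm x > c * M * s t}"
      have bd: "bdd_above (?f ` {0<..})"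
        by (rule bdd_aboveI2[where M="2 * d * g (c / (4 * d) * M)"]) (use F10 K1 in auto)
      have "(SUP t\<in>{0<..}. ?f t) \<le> 2 * d * g (c / (4 * d) * M)"
        by (rule cSUP_least) (use F10 K1 in auto)
      moreover have "0 \<le> (SUP t\<in>{0<..}. ?f t)"
      proof -
        have "?f 1 \<le> (SUP t\<in>{0<..}. ?f t)" by (rule cSUP_upper[OF _ bd]) simp
        then show ?thesis using measure_nonneg[of "\<mu> 1" "{x. norm x > c * M * s 1}"] by linarith
      qed
      ultimately show ?thesis unfolding F_def using c_pos by (simp add: mult_left_mono)
    qed
    then show ?thesis unfolding eventually_at_top_linorder by blast
  qed
  have lim1: "filterlim (\<lambda>M. c / (4 * d) * M) at_top at_top"
    by (rule filterlim_tendsto_pos_mult_at_top[OF tendsto_const _ filterlim_ident]) (use c_pos d0 in simp)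
  have "((\<lambda>M. g (c / (4 * d) * M)) \<longlongrightarrow> 0) at_top" by (rule filterlim_compose[OF hyp' lim1])
  then have lim2: "((\<lambda>M. c powr (- d) * (2 * d * g (c / (4 * d) * M))) \<longlongrightarrow> 0) at_top"
    by (auto intro!: tendsto_eq_intros)
  have "(F \<longlongrightarrow> 0) at_top"
    by (rule tendsto_sandwich[OF _ _ tendsto_const lim2]) (use ev in \<open>auto elim: eventually_mono\<close>)
  then show ?thesis unfolding F_def s_def \<Psi>_def d_def .
qed

end
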